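(* Let $V,W$ be locally convex spaces, $\Omega\subset V$ open, and $D=d+A$ a connection on $\Omega\times W\to\Omega$. Let $I\subset\mathbb R$ be an interval. Suppose $x_n\in C^1(I,\Omega)$ converge in the $C^1$ topology to $x\colon I\to\Omega$ (i.e. $x_n\to x$ and $dx_n/dt\to dx/dt$ uniformly on $I$), and that parallel lifts $\xi_n\in C^1(I,W)$ of $x_n$ converge uniformly to $\xi\colon I\to W$. Then $\xi$ is $C^1$ and is a parallel lift of $x$.
   Context: All locally convex spaces are real, Hausdorff and sequentially complete. A connection on $\Omega\times W\to\Omega$ is the operator $D_\xi\varphi(v)=d\varphi(v,\xi)+A(v,\xi)\varphi(v)$ on $C^1$ maps $\varphi\colon\Omega\to W$, where the connection form $A\colon\Omega\times V\to\mathrm{Hom}(W,W)$ (continuous linear maps) is linear in $\xi$ and $(v,\xi,w)\mapsto A(v,\xi)w\in W$ is continuous. Given a $C^1$ curve $x\colon I\to\Omega$, a parallel lift of $x$ is a $C^1$ map $\xi\colon I\to W$ with $\frac{d\xi}{dt}+A\big(x,\frac{dx}{dt}\big)\xi=0$ on $I$. *)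

theory Defs
  imports "HOL-Analysis.Analysis"
begin

text \<open>Locally convex spaces are modelled by a real vector space together with a
  family of seminorms generating the topology.\<close>

definition seminorm :: "('a::real_vector \<Rightarrow> real) \<Rightarrow> bool" where
  "seminorm p \<longleftrightarrow> (\<forall>x. 0 \<le> p x) \<and> (\<forall>x y. p (x + y) \<le> p x + p y)
     \<and> (\<forall>c x. p (c *\<^sub>R x) = \<bar>c\<bar> * p x)"

definition lcs :: "('a::real_vector \<Rightarrow> real) set \<Rightarrow> bool" where
  "lcs P \<longleftrightarrow> P \<noteq> {} \<and> (\<forall>p\<in>P. seminorm p)
     \<and> (\<forall>x. x \<noteq> 0 \<longrightarrow> (\<exists>p\<in>P. p x \<noteq> 0))
     \<and> (\<forall>X::nat \<Rightarrow> 'a. (\<forall>p\<in>P. \<forall>e>0. \<exists>N. \<forall>m\<ge>N. \<forall>n\<ge>N. p (X m - X n) < e)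
            \<longrightarrow> (\<exists>L. \<forall>p\<in>P. (\<lambda>n. p (X n - L)) \<longlonglongrightarrow> 0))"

definition snball :: "('a::real_vector \<Rightarrow> real) set \<Rightarrow> 'a \<Rightarrow> real \<Rightarrow> 'a set" where
  "snball F x e = {y. \<forall>p\<in>F. p (y - x) < e}"

definition lc_open :: "('a::real_vector \<Rightarrow> real) set \<Rightarrow> 'a set \<Rightarrow> bool" where
  "lc_open P U \<longleftrightarrow> (\<forall>x\<in>U. \<exists>F e. finite F \<and> F \<subseteq> P \<and> e > 0 \<and> snball F x e \<subseteq> U)"

text \<open>Continuity and derivatives of curves I \<rightarrow> V (one-sided at endpoints of I).\<close>
definition lc_continuous_on ::
  "('a::real_vector \<Rightarrow> real) set \<Rightarrow> real set \<Rightarrow> (real \<Rightarrow> 'a) \<Rightarrow> bool" where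
  "lc_continuous_on P I f \<longleftrightarrow>
     (\<forall>t\<in>I. \<forall>p\<in>P. ((\<lambda>s. p (f s - f t)) \<longlongrightarrow> 0) (at t within I))"

definition lc_has_derivative_on ::
  "('a::real_vector \<Rightarrow> real) set \<Rightarrow> real set \<Rightarrow> (real \<Rightarrow> 'a) \<Rightarrow> (real \<Rightarrow> 'a) \<Rightarrow> bool" where
  "lc_has_derivative_on P I f f' \<longleftrightarrow>
     (\<forall>t\<in>I. \<forall>p\<in>P.
        ((\<lambda>s. p ((1 / (s - t)) *\<^sub>R (f s - f t) - f' t)) \<longlongrightarrow> 0) (at t within I))"

definition lc_C1_on ::
  "('a::real_vector \<Rightarrow> real) set \<Rightarrow> real set \<Rightarrow> (real \<Rightarrow> 'a) \<Rightarrow> (real \<Rightarrow> 'a) \<Rightarrow> bool" where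
  "lc_C1_on P I f f' \<longleftrightarrow> lc_has_derivative_on P I f f' \<and> lc_continuous_on P I f'"

definition lc_unif_conv ::
  "('a::real_vector \<Rightarrow> real) set \<Rightarrow> real set \<Rightarrow> (nat \<Rightarrow> real \<Rightarrow> 'a) \<Rightarrow> (real \<Rightarrow> 'a) \<Rightarrow> bool" where
  "lc_unif_conv P I F f \<longleftrightarrow>
     (\<forall>p\<in>P. \<forall>e>0. \<forall>\<^sub>F n in sequentially. \<forall>t\<in>I. p (F n t - f t) < e)"

definition connection_form ::
  "('v::real_vector \<Rightarrow> real) set \<Rightarrow> ('w::real_vector \<Rightarrow> real) set \<Rightarrow> 'v set
   \<Rightarrow> ('v \<Rightarrow> 'v \<Rightarrow> 'w \<Rightarrow> 'w) \<Rightarrow> bool" where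
  "connection_form PV PW \<Omega> A \<longleftrightarrow>
     (\<forall>v\<in>\<Omega>. \<forall>w. linear (\<lambda>\<xi>. A v \<xi> w)) \<and>
     (\<forall>v\<in>\<Omega>. \<forall>\<xi>. linear (A v \<xi>)) \<and>
     (\<forall>v0\<in>\<Omega>. \<forall>\<xi>0 w0. \<forall>q\<in>PW. \<forall>e>0. \<exists>F G d. finite F \<and> F \<subseteq> PV \<and> finite G \<and> G \<subseteq> PW \<and> d > 0 \<and>
        (\<forall>v\<in>\<Omega> \<inter> snball F v0 d. \<forall>\<xi>\<in>snball F \<xi>0 d. \<forall>w\<in>snball G w0 d.
            q (A v \<xi> w - A v0 \<xi>0 w0) < e))"

definition parallel_lift ::
  "('v::real_vector \<Rightarrow> real) set \<Rightarrow> ('w::real_vector \<Rightarrow> real) set \<Rightarrow> ('v \<Rightarrow> 'v \<Rightarrow> 'w \<Rightarrow> 'w)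
   \<Rightarrow> real set \<Rightarrow> (real \<Rightarrow> 'v) \<Rightarrow> (real \<Rightarrow> 'v) \<Rightarrow> (real \<Rightarrow> 'w) \<Rightarrow> (real \<Rightarrow> 'w) \<Rightarrow> bool" where
  "parallel_lift PV PW A I x x' \<xi> \<xi>' \<longleftrightarrow>
     lc_C1_on PW I \<xi> \<xi>' \<and> (\<forall>t\<in>I. \<xi>' t + A (x t) (x' t) (\<xi> t) = 0)"

end

theory Submission
  imports Defs
begin

lemma sn_nonneg: "seminorm p \<Longrightarrow> 0 \<le> p x" by (simp add: seminorm_def)
lemma sn_add: "seminorm p \<Longrightarrow> p (x + y) \<le> p x + p y" by (simp add: seminorm_def)
lemma sn_scale: "seminorm p \<Longrightarrow> p (c *\<^sub>R x) = \<bar>c\<bar> * p x" by (simp add: seminorm_def)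
lemma sn_zero: "seminorm p \<Longrightarrow> p 0 = 0"
  using sn_scale[of p 0 0] by simp
lemma sn_minus: "seminorm p \<Longrightarrow> p (- x) = p x"
  using sn_scale[of p "-1" x] by simp
lemma sn_comm: "seminorm p \<Longrightarrow> p (x - y) = p (y - x)"
  using sn_minus[of p "y - x"] by simp
lemma sn_tri: "seminorm p \<Longrightarrow> p (x - z) \<le> p (x - y) + p (y - z)"
  using sn_add[of p "x - y" "y - z"] by simp
lemma sn_le: "seminorm p \<Longrightarrow> p x \<le> p (x - y) + p y"
  using sn_add[of p "x - y" y] by simp
lemma sn_rev: "seminorm p \<Longrightarrow> \<bar>p x - p y\<bar> \<le> p (x - y)"
  using sn_le[of p x y] sn_le[of p y x] sn_comm[of p x y] by linarith

lemma tendsto0_nonneg: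
  fixes g :: "'a \<Rightarrow> real"
  assumes "\<And>s. 0 \<le> g s"
  shows "(g \<longlongrightarrow> 0) F \<longleftrightarrow> (\<forall>e>0. eventually (\<lambda>s. g s < e) F)"
proof -
  have "\<And>s. dist (g s) 0 = g s" using assms by (simp add: dist_real_def)
  then show ?thesis unfolding tendsto_iff by simp
qed

lemma cont_of_deriv:
  fixes f f' :: "real \<Rightarrow> 'a::real_vector"
  assumes p: "seminorm p"
    and d: "((\<lambda>s. p ((1 / (s - t)) *\<^sub>R (f s - f t) - f' t)) \<longlongrightarrow> 0) (at t within S)"
  shows "((\<lambda>s. p (f s - f t)) \<longlongrightarrow> 0) (at t within S)"
proof (rule Lim_null_comparison)
  let ?D = "\<lambda>s. p ((1 / (s - t)) *\<^sub>R (f s - f t) - f' t)"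
  show "\<forall>\<^sub>F s in at t within S. norm (p (f s - f t)) \<le> \<bar>s - t\<bar> * (?D s + p (f' t))"
    using eventually_neq_at_within[where x=t and z=t and A=S]
  proof eventually_elim
    case (elim s)
    then have "f s - f t = (s - t) *\<^sub>R ((1 / (s - t)) *\<^sub>R (f s - f t))" by simp
    then have "p (f s - f t) = \<bar>s - t\<bar> * p ((1 / (s - t)) *\<^sub>R (f s - f t))"
      using sn_scale[OF p] by metis
    also have "\<dots> \<le> \<bar>s - t\<bar> * (?D s + p (f' t))"
      by (rule mult_left_mono) (use sn_le[OF p] in auto)
    finally show ?case using sn_nonneg[OF p] by simp
  qed
  have "((\<lambda>s. \<bar>s - t\<bar> * (?D s + p (f' t))) \<longlongrightarrow> \<bar>t - t\<bar> * (0 + p (f' t))) (at t within S)"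
    by (intro tendsto_intros d)
  then show "((\<lambda>s. \<bar>s - t\<bar> * (?D s + p (f' t))) \<longlongrightarrow> 0) (at t within S)" by simp
qed

lemma unif_cont:
  fixes F :: "nat \<Rightarrow> real \<Rightarrow> 'a::real_vector"
  assumes p: "seminorm p" and t: "t \<in> I"
    and c: "\<And>n. ((\<lambda>s. p (F n s - F n t)) \<longlongrightarrow> 0) (at t within I)"
    and u: "\<And>e. e > 0 \<Longrightarrow> \<forall>\<^sub>F n in sequentially. \<forall>u\<in>I. p (F n u - f u) < e"
  shows "((\<lambda>s. p (f s - f t)) \<longlongrightarrow> 0) (at t within I)"
  unfolding tendsto0_nonneg[OF sn_nonneg[OF p]]
proof (intro allI impI)
  fix e :: real assume e: "e > 0"
  obtain n where n: "\<forall>u\<in>I. p (F n u - f u) < e / 3"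
    using eventually_sequentially u[of "e/3"] e by fastforce
  have "\<forall>\<^sub>F s in at t within I. p (F n s - F n t) < e / 3"
  proof -
    have "e / 3 > 0" using e by simp
    then show ?thesis using c[of n] unfolding tendsto0_nonneg[OF sn_nonneg[OF p]] by blast
  qed
  moreover have "\<forall>\<^sub>F s in at t within I. s \<in> I"
    by (simp add: eventually_at_filter)
  ultimately show "\<forall>\<^sub>F s in at t within I. p (f s - f t) < e"
  proof eventually_elim
    case (elim s)
    have "p (f s - f t) \<le> p (f s - F n s) + p (F n s - f t)" by (rule sn_tri[OF p])
    moreover have "p (F n s - f t) \<le> p (F n s - F n t) + p (F n t - f t)" by (rule sn_tri[OF p])
    moreover have "p (F n s - f s) < e/3" "p (F n t - f t) < e/3" using n elim t by auto
    ultimately show ?case using elim sn_comm[OF p, of "f s" "F n s"] by linarith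
  qed
qed

lemma mvt_sn:
  fixes f f' :: "real \<Rightarrow> 'a::real_vector"
  assumes p: "seminorm p" and ab: "a \<le> b"
    and d: "\<And>u. u \<in> {a..b} \<Longrightarrow> ((\<lambda>s. p ((1 / (s - u)) *\<^sub>R (f s - f u) - f' u)) \<longlongrightarrow> 0) (at u within {a..b})"
    and M: "\<And>u. u \<in> {a..b} \<Longrightarrow> p (f' u - c) \<le> M"
  shows "p (f b - f a - (b - a) *\<^sub>R c) \<le> M * (b - a)"
proof -
  define \<phi> where "\<phi> u = p (f u - f a - (u - a) *\<^sub>R c)" for u
  have key: "\<phi> s - \<phi> u \<le> p (f s - f u) + \<bar>s - u\<bar> * p c" "\<bar>\<phi> s - \<phi> u\<bar> \<le> p (f s - f u) + \<bar>s - u\<bar> * p c" for s u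
  proof -
    have eq: "(f s - f a - (s - a) *\<^sub>R c) - (f u - f a - (u - a) *\<^sub>R c) = (f s - f u) + (- ((s - u) *\<^sub>R c))"
      by (simp add: algebra_simps)
    have "\<bar>\<phi> s - \<phi> u\<bar> \<le> p ((f s - f u) + (- ((s - u) *\<^sub>R c)))"
      unfolding \<phi>_def eq[symmetric] by (rule sn_rev[OF p])
    also have "\<dots> \<le> p (f s - f u) + \<bar>s - u\<bar> * p c"
      using sn_add[OF p, of "f s - f u" "- ((s - u) *\<^sub>R c)"] sn_minus[OF p] sn_scale[OF p] by simp
    finally show "\<bar>\<phi> s - \<phi> u\<bar> \<le> p (f s - f u) + \<bar>s - u\<bar> * p c" .
    then show "\<phi> s - \<phi> u \<le> p (f s - f u) + \<bar>s - u\<bar> * p c" by linarith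
  qed
  have cont: "continuous_on {a..b} \<phi>"
    unfolding continuous_on_def
  proof
    fix u assume u: "u \<in> {a..b}"
    have "((\<lambda>s. \<phi> s - \<phi> u) \<longlongrightarrow> 0) (at u within {a..b})"
    proof (rule Lim_null_comparison)
      show "\<forall>\<^sub>F s in at u within {a..b}. norm (\<phi> s - \<phi> u) \<le> p (f s - f u) + \<bar>s - u\<bar> * p c"
        using key by simp
      have "((\<lambda>s. p (f s - f u) + \<bar>s - u\<bar> * p c) \<longlongrightarrow> 0 + \<bar>u - u\<bar> * p c) (at u within {a..b})"
        by (intro tendsto_intros cont_of_deriv[where f=f and f'=f', OF p d[OF u]])
      then show "((\<lambda>s. p (f s - f u) + \<bar>s - u\<bar> * p c) \<longlongrightarrow> 0) (at u within {a..b})" by simp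
    qed
    then show "(\<phi> \<longlongrightarrow> \<phi> u) (at u within {a..b})" by (rule LIM_zero_cancel)
  qed
  have main: "\<phi> b \<le> (M + e) * (b - a)" if e: "e > 0" for e
  proof -
    define \<psi> where "\<psi> u = \<phi> u - (M + e) * (u - a)" for u
    define T where "T = {a..b} \<inter> \<psi> -` {..0}"
    have "continuous_on {a..b} \<psi>" unfolding \<psi>_def by (intro continuous_intros cont)
    then have clT: "closed T" unfolding T_def by (intro continuous_closed_preimage) auto
    have aT: "a \<in> T" using ab sn_zero[OF p] unfolding T_def \<psi>_def \<phi>_def by simp
    have Tsub: "T \<subseteq> {a..b}" unfolding T_def by auto
    have bdd: "bdd_above T" using Tsub by (meson bdd_above_Icc bdd_above_mono)
    define c0 where "c0 = Sup T"
    have c0T: "c0 \<in> T" unfolding c0_def using closed_contains_Sup[OF _ bdd clT] aT by blast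
    have ub: "s \<le> c0" if "s \<in> T" for s unfolding c0_def using cSup_upper[OF that bdd] .
    have "c0 = b"
    proof (rule ccontr)
      assume "c0 \<noteq> b"
      then have cb: "c0 < b" using c0T Tsub by auto
      have c0ab: "c0 \<in> {a..b}" using c0T Tsub by auto
      have "\<forall>\<^sub>F s in at c0 within {a..b}. p ((1 / (s - c0)) *\<^sub>R (f s - f c0) - f' c0) < e"
        using d[OF c0ab] e unfolding tendsto0_nonneg[OF sn_nonneg[OF p]] by blast
      then obtain \<delta> where \<delta>: "\<delta> > 0" and
        h: "\<And>s. s \<in> {a..b} \<Longrightarrow> s \<noteq> c0 \<Longrightarrow> dist s c0 < \<delta> \<Longrightarrow> p ((1 / (s - c0)) *\<^sub>R (f s - f c0) - f' c0) < e"
        unfolding eventually_at by blast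
      define s where "s = min b (c0 + \<delta> / 2)"
      have s1: "s \<in> {a..b}" "s \<noteq> c0" "dist s c0 < \<delta>" "s > c0"
        using cb c0ab \<delta> unfolding s_def dist_real_def by auto
      define D where "D = (1 / (s - c0)) *\<^sub>R (f s - f c0) - f' c0"
      have pD: "p D < e" using h[OF s1(1,2,3)] unfolding D_def .
      have eq1: "f s - f c0 - (s - c0) *\<^sub>R c = (s - c0) *\<^sub>R D + (s - c0) *\<^sub>R (f' c0 - c)"
        using s1(2) unfolding D_def by (simp add: algebra_simps)
      have "p (f s - f c0 - (s - c0) *\<^sub>R c) \<le> (s - c0) * p D + (s - c0) * p (f' c0 - c)"
        unfolding eq1 using sn_add[OF p] sn_scale[OF p] s1(4) by (metis abs_of_pos diff_gt_0_iff_gt)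
      also have "\<dots> \<le> (s - c0) * e + (s - c0) * M"
        using pD M[OF c0ab] s1(4) by (intro add_mono mult_left_mono) auto
      finally have b1: "p (f s - f c0 - (s - c0) *\<^sub>R c) \<le> (s - c0) * (M + e)" by (simp add: algebra_simps)
      have eq2: "f s - f a - (s - a) *\<^sub>R c = (f c0 - f a - (c0 - a) *\<^sub>R c) + (f s - f c0 - (s - c0) *\<^sub>R c)"
        by (simp add: algebra_simps)
      have "\<phi> s \<le> \<phi> c0 + p (f s - f c0 - (s - c0) *\<^sub>R c)"
        unfolding \<phi>_def eq2 by (rule sn_add[OF p])
      moreover have "\<psi> c0 \<le> 0" using c0T unfolding T_def by auto
      ultimately have "\<psi> s \<le> 0" using b1 unfolding \<psi>_def by (simp add: algebra_simps)
      then have "s \<in> T" using s1 unfolding T_def by auto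
      then show False using ub s1(4) by fastforce
    qed
    then have "\<psi> b \<le> 0" using c0T unfolding T_def by auto
    then show ?thesis unfolding \<psi>_def by simp
  qed
  have "\<phi> b \<le> M * (b - a) + e" if e: "e > 0" for e
  proof -
    have "e / (b - a + 1) > 0" using e ab by simp
    from main[OF this] have "\<phi> b \<le> M * (b - a) + e / (b - a + 1) * (b - a)" by (simp add: algebra_simps)
    also have "e / (b - a + 1) * (b - a) \<le> e"
      using e ab by (simp add: field_simps)
    finally show ?thesis by simp
  qed
  then have "\<phi> b \<le> M * (b - a)" by (rule field_le_epsilon)
  then show ?thesis unfolding \<phi>_def .
qed

lemma mvt_sym:
  fixes f f' :: "real \<Rightarrow> 'a::real_vector"
  assumes p: "seminorm p" and I: "is_interval I" and s: "s \<in> I" and t: "t \<in> I"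
    and d: "\<And>u. u \<in> I \<Longrightarrow> ((\<lambda>r. p ((1 / (r - u)) *\<^sub>R (f r - f u) - f' u)) \<longlongrightarrow> 0) (at u within I)"
    and M: "\<And>u. u \<in> {min s t..max s t} \<Longrightarrow> p (f' u - c) \<le> M"
  shows "p (f s - f t - (s - t) *\<^sub>R c) \<le> M * \<bar>s - t\<bar>"
proof -
  have sub: "{min s t..max s t} \<subseteq> I"
  proof (rule subsetI)
    fix u assume u: "u \<in> {min s t..max s t}"
    show "u \<in> I"
    proof (cases "t \<le> s")
      case True
      then show ?thesis using I s t u unfolding is_interval_1 by (metis atLeastAtMost_iff max.absorb1 min.absorb2)
    next
      case False
      then show ?thesis using I s t u unfolding is_interval_1 by (metis atLeastAtMost_iff max.absorb2 min.absorb1 nle_le)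
    qed
  qed
  have d': "((\<lambda>r. p ((1 / (r - u)) *\<^sub>R (f r - f u) - f' u)) \<longlongrightarrow> 0) (at u within {a..b})"
    if "{a..b} \<subseteq> I" "u \<in> {a..b}" for a b u
  proof -
    have "u \<in> I" using that by auto
    from tendsto_within_subset[OF d[OF this] that(1)] show ?thesis .
  qed
  show ?thesis
  proof (cases "t \<le> s")
    case True
    then have "{t..s} \<subseteq> I" using sub by (simp add: min.absorb2 max.absorb1)
    from mvt_sn[OF p True d'[OF this]] M True show ?thesis by (simp add: min_def max_def)
  next
    case False
    then have le: "s \<le> t" by simp
    then have "{s..t} \<subseteq> I" using sub by (simp add: min.absorb1 max.absorb2)
    from mvt_sn[OF p le d'[OF this], of c M] M le
    have "p (f t - f s - (t - s) *\<^sub>R c) \<le> M * (t - s)" by (simp add: min_def max_def)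
    moreover have "f s - f t - (s - t) *\<^sub>R c = - (f t - f s - (t - s) *\<^sub>R c)" by (simp add: algebra_simps)
    ultimately have "p (f s - f t - (s - t) *\<^sub>R c) \<le> M * (t - s)" using sn_minus[OF p, of "f t - f s - (t - s) *\<^sub>R c"] by metis
    then show ?thesis using le by (simp add: abs_of_nonpos)
  qed
qed

lemma sn_half: "seminorm p \<Longrightarrow> p (a - b) < d / 2 \<Longrightarrow> p (b - c) < d / 2 \<Longrightarrow> p (a - c) < d"
  using sn_tri[of p a c b] by linarith

lemma seg_bounds:
  fixes s t u :: real
  assumes u: "u \<in> {min s t..max s t}"
  shows "(t \<le> u \<and> u \<le> s) \<or> (s \<le> u \<and> u \<le> t)"
proof (cases "t \<le> s")
  case True
  then have "min s t = t" "max s t = s" by (simp_all add: min_def max_def)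
  then show ?thesis using u by auto
next
  case False
  then have "min s t = s" "max s t = t" by (simp_all add: min_def max_def)
  then show ?thesis using u by auto
qed

lemma seg_in:
  fixes I :: "real set"
  assumes I: "is_interval I" and s: "s \<in> I" and t: "t \<in> I" and u: "u \<in> {min s t..max s t}"
  shows "u \<in> I"
proof -
  have iv: "\<And>a b x. a \<in> I \<Longrightarrow> b \<in> I \<Longrightarrow> a \<le> x \<Longrightarrow> x \<le> b \<Longrightarrow> x \<in> I"
    using mem_is_interval_1_I[OF I] by blast
  from seg_bounds[OF u] show ?thesis
  proof
    assume "t \<le> u \<and> u \<le> s" then show ?thesis using iv[OF t s] by blast
  next
    assume "s \<le> u \<and> u \<le> t" then show ?thesis using iv[OF s t] by blast
  qed
qed

lemma seg_dist:
  fixes s t u :: real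
  assumes u: "u \<in> {min s t..max s t}"
  shows "\<bar>u - t\<bar> \<le> \<bar>s - t\<bar>"
  using seg_bounds[OF u] by linarith

theorem lemma6p1:
  fixes PV :: "('v::real_vector \<Rightarrow> real) set" and PW :: "('w::real_vector \<Rightarrow> real) set"
    and \<Omega> :: "'v set" and A :: "'v \<Rightarrow> 'v \<Rightarrow> 'w \<Rightarrow> 'w" and I :: "real set"
    and xs xs' :: "nat \<Rightarrow> real \<Rightarrow> 'v" and x x' :: "real \<Rightarrow> 'v"
    and \<xi>s \<xi>s' :: "nat \<Rightarrow> real \<Rightarrow> 'w" and \<xi> :: "real \<Rightarrow> 'w"
  assumes "lcs PV" and "lcs PW" and "lc_open PV \<Omega>"
    and "connection_form PV PW \<Omega> A"
    and "is_interval I"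
    and "\<And>n. lc_C1_on PV I (xs n) (xs' n)" and "\<And>n t. t \<in> I \<Longrightarrow> xs n t \<in> \<Omega>"
    and "\<And>t. t \<in> I \<Longrightarrow> x t \<in> \<Omega>"
    and "lc_has_derivative_on PV I x x'"
    and "lc_unif_conv PV I xs x" and "lc_unif_conv PV I xs' x'"
    and "\<And>n. parallel_lift PV PW A I (xs n) (xs' n) (\<xi>s n) (\<xi>s' n)"
    and "lc_unif_conv PW I \<xi>s \<xi>"
  shows "\<exists>\<xi>'. parallel_lift PV PW A I x x' \<xi> \<xi>'"
proof -
  have sPV: "\<And>p. p \<in> PV \<Longrightarrow> seminorm p" using assms(1) unfolding lcs_def by auto
  have sPW: "\<And>p. p \<in> PW \<Longrightarrow> seminorm p" using assms(2) unfolding lcs_def by auto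
  have cA: "\<And>v0 \<xi>0 w0 q e. v0 \<in> \<Omega> \<Longrightarrow> q \<in> PW \<Longrightarrow> e > 0 \<Longrightarrow> \<exists>F G d. finite F \<and> F \<subseteq> PV \<and> finite G \<and> G \<subseteq> PW \<and> d > 0 \<and>
        (\<forall>v\<in>\<Omega> \<inter> snball F v0 d. \<forall>\<xi>\<in>snball F \<xi>0 d. \<forall>w\<in>snball G w0 d.
            q (A v \<xi> w - A v0 \<xi>0 w0) < e)"
    using assms(4) unfolding connection_form_def by blast
  have cxs': "\<And>n t p. t \<in> I \<Longrightarrow> p \<in> PV \<Longrightarrow> ((\<lambda>s. p (xs' n s - xs' n t)) \<longlongrightarrow> 0) (at t within I)"
    using assms(6) unfolding lc_C1_on_def lc_continuous_on_def by blast
  have dxi: "\<And>n t q. t \<in> I \<Longrightarrow> q \<in> PW \<Longrightarrow> ((\<lambda>s. q ((1 / (s - t)) *\<^sub>R (\<xi>s n s - \<xi>s n t) - \<xi>s' n t)) \<longlongrightarrow> 0) (at t within I)"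
    using assms(12) unfolding parallel_lift_def lc_C1_on_def lc_has_derivative_on_def by blast
  have xi'eq: "\<And>n t. t \<in> I \<Longrightarrow> \<xi>s' n t = - A (xs n t) (xs' n t) (\<xi>s n t)"
  proof -
    fix n t assume t: "t \<in> I"
    have "\<xi>s' n t + A (xs n t) (xs' n t) (\<xi>s n t) = 0" using assms(12)[of n] t unfolding parallel_lift_def by blast
    then show "\<xi>s' n t = - A (xs n t) (xs' n t) (\<xi>s n t)" by (simp add: eq_neg_iff_add_eq_0)
  qed
  have uxs: "\<And>p e. p \<in> PV \<Longrightarrow> e > 0 \<Longrightarrow> \<forall>\<^sub>F n in sequentially. \<forall>u\<in>I. p (xs n u - x u) < e"
    using assms(10) unfolding lc_unif_conv_def by blast
  have uxs': "\<And>p e. p \<in> PV \<Longrightarrow> e > 0 \<Longrightarrow> \<forall>\<^sub>F n in sequentially. \<forall>u\<in>I. p (xs' n u - x' u) < e"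
    using assms(11) unfolding lc_unif_conv_def by blast
  have uxi: "\<And>p e. p \<in> PW \<Longrightarrow> e > 0 \<Longrightarrow> \<forall>\<^sub>F n in sequentially. \<forall>u\<in>I. p (\<xi>s n u - \<xi> u) < e"
    using assms(13) unfolding lc_unif_conv_def by blast
  have cx: "\<And>t p. t \<in> I \<Longrightarrow> p \<in> PV \<Longrightarrow> ((\<lambda>s. p (x s - x t)) \<longlongrightarrow> 0) (at t within I)"
  proof -
    fix t p assume t: "t \<in> I" and p: "p \<in> PV"
    show "((\<lambda>s. p (x s - x t)) \<longlongrightarrow> 0) (at t within I)"
      by (rule cont_of_deriv[where f'=x', OF sPV[OF p]]) (use assms(9) t p in \<open>auto simp: lc_has_derivative_on_def\<close>)
  qed
  have cx': "\<And>t p. t \<in> I \<Longrightarrow> p \<in> PV \<Longrightarrow> ((\<lambda>s. p (x' s - x' t)) \<longlongrightarrow> 0) (at t within I)"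
  proof -
    fix t p assume t: "t \<in> I" and p: "p \<in> PV"
    show "((\<lambda>s. p (x' s - x' t)) \<longlongrightarrow> 0) (at t within I)"
      by (rule unif_cont[OF sPV[OF p] t cxs'[OF t p] uxs'[OF p]])
  qed
  have cxi: "\<And>t p. t \<in> I \<Longrightarrow> p \<in> PW \<Longrightarrow> ((\<lambda>s. p (\<xi> s - \<xi> t)) \<longlongrightarrow> 0) (at t within I)"
  proof -
    fix t p assume t: "t \<in> I" and p: "p \<in> PW"
    have "((\<lambda>s. p (\<xi>s n s - \<xi>s n t)) \<longlongrightarrow> 0) (at t within I)" for n
      by (rule cont_of_deriv[where f' = "\<xi>s' n", OF sPW[OF p] dxi[OF t p]])
    then show "((\<lambda>s. p (\<xi> s - \<xi> t)) \<longlongrightarrow> 0) (at t within I)"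
      by (rule unif_cont[OF sPW[OF p] t _ uxi[OF p]])
  qed
  have near: "\<exists>\<delta>>0. \<exists>N. (\<forall>n\<ge>N. \<forall>u\<in>I. \<bar>u - t\<bar> < \<delta> \<longrightarrow>
        q (A (xs n u) (xs' n u) (\<xi>s n u) - A (x t) (x' t) (\<xi> t)) < e)
      \<and> (\<forall>u\<in>I. \<bar>u - t\<bar> < \<delta> \<longrightarrow> q (A (x u) (x' u) (\<xi> u) - A (x t) (x' t) (\<xi> t)) < e)"
    if t: "t \<in> I" and q: "q \<in> PW" and e: "e > 0" for t q e
  proof -
    obtain F G d where F: "finite F" "F \<subseteq> PV" and G: "finite G" "G \<subseteq> PW" and d: "d > 0"
      and H: "\<forall>v\<in>\<Omega> \<inter> snball F (x t) d. \<forall>\<xi>'\<in>snball F (x' t) d. \<forall>w\<in>snball G (\<xi> t) d.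
            q (A v \<xi>' w - A (x t) (x' t) (\<xi> t)) < e"
      using cA[OF assms(8)[OF t] q e, of "x' t" "\<xi> t"] by blast
    have d2: "d / 2 > 0" using d by simp
    define P1 where "P1 s \<longleftrightarrow> (\<forall>p\<in>F. p (x s - x t) < d/2) \<and> (\<forall>p\<in>F. p (x' s - x' t) < d/2)
          \<and> (\<forall>p\<in>G. p (\<xi> s - \<xi> t) < d/2)" for s
    define P2 where "P2 n \<longleftrightarrow> (\<forall>p\<in>F. \<forall>u\<in>I. p (xs n u - x u) < d/2) \<and> (\<forall>p\<in>F. \<forall>u\<in>I. p (xs' n u - x' u) < d/2)
          \<and> (\<forall>p\<in>G. \<forall>u\<in>I. p (\<xi>s n u - \<xi> u) < d/2)" for n
    have "\<forall>\<^sub>F s in at t within I. (\<forall>p\<in>F. p (x s - x t) < d/2) \<and> (\<forall>p\<in>F. p (x' s - x' t) < d/2)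
          \<and> (\<forall>p\<in>G. p (\<xi> s - \<xi> t) < d/2)"
    proof (intro eventually_conj eventually_ball_finite F(1) G(1) ballI)
      fix p assume "p \<in> F"
      then have p: "p \<in> PV" using F by auto
      show "\<forall>\<^sub>F s in at t within I. p (x s - x t) < d/2"
        using cx[OF t p] d2 unfolding tendsto0_nonneg[OF sn_nonneg[OF sPV[OF p]]] by blast
      show "\<forall>\<^sub>F s in at t within I. p (x' s - x' t) < d/2"
        using cx'[OF t p] d2 unfolding tendsto0_nonneg[OF sn_nonneg[OF sPV[OF p]]] by blast
    next
      fix p assume "p \<in> G"
      then have p: "p \<in> PW" using G by auto
      show "\<forall>\<^sub>F s in at t within I. p (\<xi> s - \<xi> t) < d/2"
        using cxi[OF t p] d2 unfolding tendsto0_nonneg[OF sn_nonneg[OF sPW[OF p]]] by blast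
    qed
    then have ev1: "eventually P1 (at t within I)" unfolding P1_def .
    then obtain \<delta> where \<delta>: "\<delta> > 0" and h: "\<forall>s\<in>I. s \<noteq> t \<and> dist s t < \<delta> \<longrightarrow> P1 s"
      unfolding eventually_at by blast
    have locP: "P1 s" if "s \<in> I" "\<bar>s - t\<bar> < \<delta>" for s
    proof (cases "s = t")
      case True
      have "\<And>p. p \<in> F \<Longrightarrow> p 0 = 0" "\<And>p. p \<in> G \<Longrightarrow> p 0 = 0"
        using F(2) G(2) sn_zero[OF sPV] sn_zero[OF sPW] by blast+
      then show ?thesis unfolding P1_def using d2 True by force
    next
      case False
      then show ?thesis using h that by (simp add: dist_real_def)
    qed
    have loc: "(\<forall>p\<in>F. p (x s - x t) < d/2) \<and> (\<forall>p\<in>F. p (x' s - x' t) < d/2)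
          \<and> (\<forall>p\<in>G. p (\<xi> s - \<xi> t) < d/2)" if "s \<in> I" "\<bar>s - t\<bar> < \<delta>" for s
      using locP[OF that] unfolding P1_def .
    have "\<forall>\<^sub>F n in sequentially. (\<forall>p\<in>F. \<forall>u\<in>I. p (xs n u - x u) < d/2) \<and> (\<forall>p\<in>F. \<forall>u\<in>I. p (xs' n u - x' u) < d/2)
          \<and> (\<forall>p\<in>G. \<forall>u\<in>I. p (\<xi>s n u - \<xi> u) < d/2)"
    proof (intro eventually_conj)
      show "\<forall>\<^sub>F n in sequentially. \<forall>p\<in>F. \<forall>u\<in>I. p (xs n u - x u) < d/2"
        by (rule eventually_ball_finite[OF F(1)]) (use F(2) uxs d2 in blast)
      show "\<forall>\<^sub>F n in sequentially. \<forall>p\<in>F. \<forall>u\<in>I. p (xs' n u - x' u) < d/2"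
        by (rule eventually_ball_finite[OF F(1)]) (use F(2) uxs' d2 in blast)
      show "\<forall>\<^sub>F n in sequentially. \<forall>p\<in>G. \<forall>u\<in>I. p (\<xi>s n u - \<xi> u) < d/2"
        by (rule eventually_ball_finite[OF G(1)]) (use G(2) uxi d2 in blast)
    qed
    then have "eventually P2 sequentially" unfolding P2_def .
    then obtain N where NP: "\<forall>n\<ge>N. P2 n" unfolding eventually_sequentially by blast
    have N: "(\<forall>p\<in>F. \<forall>u\<in>I. p (xs n u - x u) < d/2) \<and> (\<forall>p\<in>F. \<forall>u\<in>I. p (xs' n u - x' u) < d/2)
          \<and> (\<forall>p\<in>G. \<forall>u\<in>I. p (\<xi>s n u - \<xi> u) < d/2)" if "n \<ge> N" for n
      using NP that unfolding P2_def by blast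
    show ?thesis
    proof (intro exI conjI allI impI ballI)
      show "\<delta> > 0" by (rule \<delta>)
    next
      fix n u assume n: "N \<le> n" and u: "u \<in> I" and ut: "\<bar>u - t\<bar> < \<delta>"
      note L = loc[OF u ut] and NN = N[OF n]
      have "xs n u \<in> \<Omega> \<inter> snball F (x t) d" unfolding snball_def
      proof (intro IntI CollectI ballI)
        show "xs n u \<in> \<Omega>" by (rule assms(7)[OF u])
        fix p assume pF: "p \<in> F"
        have "p (xs n u - x u) < d/2" using NN pF u by blast
        moreover have "p (x u - x t) < d/2" using L pF by blast
        moreover have "seminorm p" using pF F(2) sPV by blast
        ultimately show "p (xs n u - x t) < d" using sn_half by blast
      qed
      moreover have "xs' n u \<in> snball F (x' t) d" unfolding snball_def
      proof (intro CollectI ballI)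
        fix p assume pF: "p \<in> F"
        have "p (xs' n u - x' u) < d/2" using NN pF u by blast
        moreover have "p (x' u - x' t) < d/2" using L pF by blast
        moreover have "seminorm p" using pF F(2) sPV by blast
        ultimately show "p (xs' n u - x' t) < d" using sn_half by blast
      qed
      moreover have "\<xi>s n u \<in> snball G (\<xi> t) d" unfolding snball_def
      proof (intro CollectI ballI)
        fix p assume pF: "p \<in> G"
        have "p (\<xi>s n u - \<xi> u) < d/2" using NN pF u by blast
        moreover have "p (\<xi> u - \<xi> t) < d/2" using L pF by blast
        moreover have "seminorm p" using pF G(2) sPW by blast
        ultimately show "p (\<xi>s n u - \<xi> t) < d" using sn_half by blast
      qed
      ultimately show "q (A (xs n u) (xs' n u) (\<xi>s n u) - A (x t) (x' t) (\<xi> t)) < e" using H by blast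
    next
      fix u assume u: "u \<in> I" and ut: "\<bar>u - t\<bar> < \<delta>"
      note L = loc[OF u ut]
      have dd: "d / 2 < d" using d by simp
      have "x u \<in> \<Omega> \<inter> snball F (x t) d" unfolding snball_def
      proof (intro IntI CollectI ballI)
        show "x u \<in> \<Omega>" by (rule assms(8)[OF u])
        fix p assume "p \<in> F" then show "p (x u - x t) < d" using L dd by force
      qed
      moreover have "x' u \<in> snball F (x' t) d" unfolding snball_def
      proof (intro CollectI ballI)
        fix p assume "p \<in> F" then show "p (x' u - x' t) < d" using L dd by force
      qed
      moreover have "\<xi> u \<in> snball G (\<xi> t) d" unfolding snball_def
      proof (intro CollectI ballI)
        fix p assume "p \<in> G" then show "p (\<xi> u - \<xi> t) < d" using L dd by force
      qed
      ultimately show "q (A (x u) (x' u) (\<xi> u) - A (x t) (x' t) (\<xi> t)) < e" using H by blast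
    qed
  qed
  define \<xi>' where "\<xi>' t = - A (x t) (x' t) (\<xi> t)" for t
  have C: "lc_continuous_on PW I \<xi>'"
    unfolding lc_continuous_on_def
  proof (intro ballI)
    fix t q assume t: "t \<in> I" and q: "q \<in> PW"
    show "((\<lambda>s. q (\<xi>' s - \<xi>' t)) \<longlongrightarrow> 0) (at t within I)"
      unfolding tendsto0_nonneg[OF sn_nonneg[OF sPW[OF q]]]
    proof (intro allI impI)
      fix e :: real assume e: "e > 0"
      obtain \<delta> where \<delta>: "\<delta> > 0" and
        h: "\<forall>u\<in>I. \<bar>u - t\<bar> < \<delta> \<longrightarrow> q (A (x u) (x' u) (\<xi> u) - A (x t) (x' t) (\<xi> t)) < e"
        using near[OF t q e] by blast
      show "\<forall>\<^sub>F s in at t within I. q (\<xi>' s - \<xi>' t) < e"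
        unfolding eventually_at
      proof (intro exI conjI ballI impI)
        fix s assume s: "s \<in> I" and "s \<noteq> t \<and> dist s t < \<delta>"
        then have "\<bar>s - t\<bar> < \<delta>" by (simp add: dist_real_def)
        moreover have "\<xi>' s - \<xi>' t = - (A (x s) (x' s) (\<xi> s) - A (x t) (x' t) (\<xi> t))"
          unfolding \<xi>'_def by simp
        ultimately show "q (\<xi>' s - \<xi>' t) < e" using h s sn_comm[OF sPW[OF q], of "A (x t) (x' t) (\<xi> t)" "A (x s) (x' s) (\<xi> s)"] by simp
      qed (rule \<delta>)
    qed
  qed
  have D: "lc_has_derivative_on PW I \<xi> \<xi>'"
    unfolding lc_has_derivative_on_def
  proof (intro ballI)
    fix t q assume t: "t \<in> I" and q: "q \<in> PW"
    note sq = sPW[OF q]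
    show "((\<lambda>s. q ((1 / (s - t)) *\<^sub>R (\<xi> s - \<xi> t) - \<xi>' t)) \<longlongrightarrow> 0) (at t within I)"
      unfolding tendsto0_nonneg[OF sn_nonneg[OF sq]]
    proof (intro allI impI)
      fix e :: real assume e: "e > 0"
      then have e2: "e / 2 > 0" by simp
      obtain \<delta> N where \<delta>: "\<delta> > 0" and
        h: "\<forall>n\<ge>N. \<forall>u\<in>I. \<bar>u - t\<bar> < \<delta> \<longrightarrow> q (A (xs n u) (xs' n u) (\<xi>s n u) - A (x t) (x' t) (\<xi> t)) < e / 2"
        using near[OF t q e2] by blast
      show "\<forall>\<^sub>F s in at t within I. q ((1 / (s - t)) *\<^sub>R (\<xi> s - \<xi> t) - \<xi>' t) < e"
        unfolding eventually_at
      proof (intro exI conjI ballI impI)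
        fix s assume s: "s \<in> I" and "s \<noteq> t \<and> dist s t < \<delta>"
        then have st: "s \<noteq> t" "\<bar>s - t\<bar> < \<delta>" by (auto simp: dist_real_def)
        have bn: "q (\<xi>s n s - \<xi>s n t - (s - t) *\<^sub>R \<xi>' t) \<le> e / 2 * \<bar>s - t\<bar>" if n: "n \<ge> N" for n
        proof (rule mvt_sym[OF sq assms(5) s t dxi[OF _ q]])
          fix u assume u: "u \<in> {min s t..max s t}"
          have uI: "u \<in> I" by (rule seg_in[OF assms(5) s t u])
          have "\<bar>u - t\<bar> < \<delta>" using seg_dist[OF u] st(2) by linarith
          then have "q (A (xs n u) (xs' n u) (\<xi>s n u) - A (x t) (x' t) (\<xi> t)) < e / 2"
            using h n uI by blast
          moreover have "\<xi>s' n u - \<xi>' t = - (A (xs n u) (xs' n u) (\<xi>s n u) - A (x t) (x' t) (\<xi> t))"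
            unfolding \<xi>'_def xi'eq[OF uI] by simp
          ultimately show "q (\<xi>s' n u - \<xi>' t) \<le> e / 2" using sn_comm[OF sq, of "A (x t) (x' t) (\<xi> t)" "A (xs n u) (xs' n u) (\<xi>s n u)"] by simp
        qed
        define Y where "Y = \<xi> s - \<xi> t - (s - t) *\<^sub>R \<xi>' t"
        have "q Y \<le> e / 2 * \<bar>s - t\<bar> + \<eta>" if \<eta>: "\<eta> > 0" for \<eta>
        proof -
          have "\<eta> / 2 > 0" using \<eta> by simp
          from uxi[OF q this] obtain N2 where N2: "\<And>n. n \<ge> N2 \<Longrightarrow> \<forall>u\<in>I. q (\<xi>s n u - \<xi> u) < \<eta> / 2"
            unfolding eventually_sequentially by blast
          define n where "n = max N N2"
          have a1: "q (\<xi>s n s - \<xi> s) < \<eta> / 2" "q (\<xi>s n t - \<xi> t) < \<eta> / 2"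
            using N2[of n] s t unfolding n_def by auto
          have a2: "q (\<xi>s n s - \<xi>s n t - (s - t) *\<^sub>R \<xi>' t) \<le> e / 2 * \<bar>s - t\<bar>"
            using bn[of n] unfolding n_def by simp
          have eq: "Y = (\<xi>s n s - \<xi>s n t - (s - t) *\<^sub>R \<xi>' t) + ((\<xi>s n t - \<xi> t) + (- (\<xi>s n s - \<xi> s)))"
            unfolding Y_def by (simp add: algebra_simps)
          have "q Y \<le> q (\<xi>s n s - \<xi>s n t - (s - t) *\<^sub>R \<xi>' t) + (q (\<xi>s n t - \<xi> t) + q (\<xi>s n s - \<xi> s))"
          proof -
            have "q Y \<le> q (\<xi>s n s - \<xi>s n t - (s - t) *\<^sub>R \<xi>' t) + q ((\<xi>s n t - \<xi> t) + (- (\<xi>s n s - \<xi> s)))"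
              unfolding eq by (rule sn_add[OF sq])
            moreover have "q ((\<xi>s n t - \<xi> t) + (- (\<xi>s n s - \<xi> s))) \<le> q (\<xi>s n t - \<xi> t) + q (- (\<xi>s n s - \<xi> s))"
              by (rule sn_add[OF sq])
            moreover have "q (- (\<xi>s n s - \<xi> s)) = q (\<xi>s n s - \<xi> s)" by (rule sn_minus[OF sq])
            ultimately show ?thesis by linarith
          qed
          then show ?thesis using a1 a2 by linarith
        qed
        then have qY: "q Y \<le> e / 2 * \<bar>s - t\<bar>" by (rule field_le_epsilon)
        have "(1 / (s - t)) *\<^sub>R (\<xi> s - \<xi> t) - \<xi>' t = (1 / (s - t)) *\<^sub>R Y"
          using st(1) unfolding Y_def scaleR_right_diff_distrib by simp
        then have "q ((1 / (s - t)) *\<^sub>R (\<xi> s - \<xi> t) - \<xi>' t) = q Y / \<bar>s - t\<bar>"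
          using sn_scale[OF sq] by simp
        also have "\<dots> \<le> e / 2" using qY st(1) by (simp add: divide_le_eq)
        finally show "q ((1 / (s - t)) *\<^sub>R (\<xi> s - \<xi> t) - \<xi>' t) < e" using e by linarith
      qed (rule \<delta>)
    qed
  qed
  have "parallel_lift PV PW A I x x' \<xi> \<xi>'"
    unfolding parallel_lift_def lc_C1_on_def using C D by (simp add: \<xi>'_def)
  then show ?thesis by blast
qed

end
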